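(* Let $S,T \in \mathbb S$ and assume $h_S \not\leq^* f_T$. Then $S$ is nowhere dense in $T$.
   Context: $\mathbb S$ is the set of perfect subtrees of ${}^{<\omega}2$, ordered by inclusion. A node $\sigma\in T$ is splitting if $\sigma^\frown0,\sigma^\frown1\in T$; the splitting predecessors of a node $s\in T$ are the splitting nodes of $T$ that are proper initial segments of $s$. For $T\in\mathbb S$ define $h_T(n)=\min\{k: \text{some node of } T \text{ of length } k \text{ has } n \text{ splitting predecessors}\}$ and $f_T(n)=\min\{k:\text{every node of } T\text{ of length } k \text{ has } 2n \text{ splitting predecessors}\}$. For $f,g\in{}^\omega\omega$, $g\le^* f$ means $g(n)\le f(n)$ for all but finitely many $n$. For $s\in T$, $T_s=\{t\in T: t\subseteq s\text{ or } s\subseteq t\}$. $S$ is somewhere dense in $T$ if there is $s\in T$ with $T_s\subseteq S$; otherwise $S$ is nowhere dense in $T$. *)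

theory Defs
  imports Main "HOL-Library.Sublist"
begin

text \<open>Finite binary sequences are bool lists; s is an initial segment of t iff prefix s t.\<close>

definition is_tree :: "bool list set \<Rightarrow> bool" where
  "is_tree T \<longleftrightarrow> T \<noteq> {} \<and> (\<forall>t\<in>T. \<forall>s. prefix s t \<longrightarrow> s \<in> T)"

definition splitting :: "bool list set \<Rightarrow> bool list \<Rightarrow> bool" where
  "splitting T \<sigma> \<longleftrightarrow> \<sigma> @ [False] \<in> T \<and> \<sigma> @ [True] \<in> T"

definition perfect_tree :: "bool list set \<Rightarrow> bool" where
  "perfect_tree T \<longleftrightarrow> is_tree T \<and> (\<forall>s\<in>T. \<exists>t\<in>T. prefix s t \<and> splitting T t)"

definition split_preds :: "bool list set \<Rightarrow> bool list \<Rightarrow> bool list set" where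
  "split_preds T s = {\<sigma>. splitting T \<sigma> \<and> strict_prefix \<sigma> s}"

definition h_fun :: "bool list set \<Rightarrow> nat \<Rightarrow> nat" where
  "h_fun T n = (LEAST k. \<exists>s\<in>T. length s = k \<and> card (split_preds T s) = n)"

definition f_fun :: "bool list set \<Rightarrow> nat \<Rightarrow> nat" where
  "f_fun T n = (LEAST k. \<forall>s\<in>T. length s = k \<longrightarrow> card (split_preds T s) \<ge> 2 * n)"

definition eventually_le :: "(nat \<Rightarrow> nat) \<Rightarrow> (nat \<Rightarrow> nat) \<Rightarrow> bool" where
  "eventually_le g f \<longleftrightarrow> (\<forall>\<^sub>F n in sequentially. g n \<le> f n)"

definition subtree_at :: "bool list set \<Rightarrow> bool list \<Rightarrow> bool list set" where
  "subtree_at T s = {t\<in>T. prefix t s \<or> prefix s t}"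

definition nowhere_dense_in :: "bool list set \<Rightarrow> bool list set \<Rightarrow> bool" where
  "nowhere_dense_in S T \<longleftrightarrow> \<not> (\<exists>s\<in>T. subtree_at T s \<subseteq> S)"

end

theory Submission
  imports Defs
begin

lemma tree_prefix: "is_tree T \<Longrightarrow> t \<in> T \<Longrightarrow> prefix s t \<Longrightarrow> s \<in> T"
  unfolding is_tree_def by blast

lemma tree_nil: "is_tree T \<Longrightarrow> [] \<in> T"
proof -
  assume a: "is_tree T"
  then obtain t where "t \<in> T" unfolding is_tree_def by blast
  then show "[] \<in> T" using a Nil_prefix[of t] unfolding is_tree_def by blast
qed

lemma strict_prefixes_sub: "{\<sigma>. strict_prefix \<sigma> u} \<subseteq> (\<lambda>i. take i u) ` {..<length u}"
proof
  fix \<sigma> assume "\<sigma> \<in> {\<sigma>. strict_prefix \<sigma> u}"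
  then have sp: "strict_prefix \<sigma> u" by simp
  then have "\<sigma> = take (length \<sigma>) u" by (metis append_eq_conv_conj prefix_def strict_prefix_def)
  moreover have "length \<sigma> < length u" using sp prefix_length_less by blast
  ultimately show "\<sigma> \<in> (\<lambda>i. take i u) ` {..<length u}" by blast
qed

lemma strict_prefixes_finite: "finite {\<sigma>. strict_prefix \<sigma> u}"
  by (rule finite_surj[OF finite_lessThan strict_prefixes_sub])

lemma strict_prefixes_card: "card {\<sigma>. strict_prefix \<sigma> u} \<le> length u"
proof -
  have "card {\<sigma>. strict_prefix \<sigma> u} \<le> card ((\<lambda>i. take i u) ` {..<length u})"
    by (rule card_mono[OF finite_imageI[OF finite_lessThan] strict_prefixes_sub])
  also have "\<dots> \<le> card {..<length u}" by (rule card_image_le) simp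
  finally show ?thesis by simp
qed

lemma split_preds_finite: "finite (split_preds T u)"
  unfolding split_preds_def by (rule finite_subset[OF _ strict_prefixes_finite]) auto

lemma split_preds_card: "card (split_preds T u) \<le> length u"
proof -
  have "card (split_preds T u) \<le> card {\<sigma>. strict_prefix \<sigma> u}"
    unfolding split_preds_def by (rule card_mono[OF strict_prefixes_finite]) auto
  then show ?thesis using strict_prefixes_card le_trans by blast
qed

lemma extension:
  assumes "perfect_tree T" "s \<in> T"
  shows "\<exists>u\<in>T. prefix s u \<and> length u = length s + d"
proof (induction d)
  case 0
  then show ?case using assms(2) by auto
next
  case (Suc d)
  then obtain u where u: "u \<in> T" "prefix s u" "length u = length s + d" by blast
  then obtain t where t: "t \<in> T" "prefix u t" "splitting T t"
    using assms(1) unfolding perfect_tree_def by blast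
  have tT: "t @ [False] \<in> T" using t(3) unfolding splitting_def by blast
  define v where "v = take (Suc (length s + d)) (t @ [False])"
  have "prefix v (t @ [False])" unfolding v_def by (rule take_is_prefix)
  then have "v \<in> T" using tT assms(1) tree_prefix unfolding perfect_tree_def by blast
  moreover have lt: "length t \<ge> length u" using t(2) prefix_length_le by blast
  then have "length v = Suc (length s + d)" unfolding v_def using u(3) by simp
  moreover have "prefix u v"
  proof -
    have "prefix u (t @ [False])" using t(2) prefix_prefix by blast
    then have "u = take (length u) (t @ [False])"
      by (metis append_eq_conv_conj prefix_def)
    then have "u = take (length u) v" unfolding v_def using u(3)
      by (metis min.absorb1 le_SucI order_refl take_take)
    then show ?thesis by (metis take_is_prefix)
  qed
  ultimately show ?case using u(2) prefix_order.order_trans by auto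
qed

definition C :: "bool list set \<Rightarrow> bool list \<Rightarrow> bool list \<Rightarrow> bool list set" where
  "C T t u = {\<sigma>\<in>split_preds T u. prefix t \<sigma>}"

definition B :: "bool list set \<Rightarrow> bool list \<Rightarrow> nat \<Rightarrow> bool list set" where
  "B T t j = {u\<in>T. prefix t u \<and> card (C T t u) \<le> j}"

lemma C_finite: "finite (C T t u)"
  unfolding C_def using split_preds_finite by auto

lemma min_split:
  assumes "perfect_tree T" "t \<in> T"
  shows "\<exists>u0\<in>T. prefix t u0 \<and> splitting T u0 \<and>
     (\<forall>\<sigma>. prefix t \<sigma> \<and> strict_prefix \<sigma> u0 \<longrightarrow> \<not> splitting T \<sigma>)"
proof -
  let ?P = "\<lambda>L. \<exists>u\<in>T. prefix t u \<and> splitting T u \<and> length u = L"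
  obtain u1 where "u1 \<in> T" "prefix t u1" "splitting T u1"
    using assms unfolding perfect_tree_def by blast
  then have ex: "?P (length u1)" by blast
  define L0 where "L0 = (LEAST L. ?P L)"
  have "?P L0" unfolding L0_def using ex by (rule LeastI)
  then obtain u0 where u0: "u0 \<in> T" "prefix t u0" "splitting T u0" "length u0 = L0" by blast
  have "\<forall>\<sigma>. prefix t \<sigma> \<and> strict_prefix \<sigma> u0 \<longrightarrow> \<not> splitting T \<sigma>"
  proof (intro allI impI notI)
    fix \<sigma> assume a: "prefix t \<sigma> \<and> strict_prefix \<sigma> u0" and sp: "splitting T \<sigma>"
    have TT: "is_tree T" using assms(1) unfolding perfect_tree_def by blast
    have "prefix \<sigma> u0" using a by (simp add: strict_prefix_def)
    then have "\<sigma> \<in> T" using tree_prefix[OF TT u0(1)] by blast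
    then have "?P (length \<sigma>)" using a sp by blast
    then have "L0 \<le> length \<sigma>" unfolding L0_def by (rule Least_le)
    moreover have "length \<sigma> < L0" using a u0(4) prefix_length_less by blast
    ultimately show False by simp
  qed
  then show ?thesis using u0 by blast
qed

lemma comparable:
  assumes "perfect_tree T" "u \<in> T" "u0 \<in> T" "prefix t u" "prefix t u0" "splitting T u0"
    and min: "\<forall>\<sigma>. prefix t \<sigma> \<and> strict_prefix \<sigma> u0 \<longrightarrow> \<not> splitting T \<sigma>"
  shows "prefix u u0 \<or> (\<exists>b. prefix (u0 @ [b]) u)"
proof (cases "prefix u u0 \<or> prefix u0 u")
  case True
  then show ?thesis
  proof
    assume "prefix u0 u"
    then obtain r where r: "u = u0 @ r" by (auto simp: prefix_def)
    show ?thesis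
    proof (cases r)
      case Nil then show ?thesis using r by simp
    next
      case (Cons b rs) then have "prefix (u0 @ [b]) u" using r by simp
      then show ?thesis by blast
    qed
  qed simp
next
  case False
  then have "u \<parallel> u0" by (simp add: parallel_def)
  then obtain as b bs c cs where d: "b \<noteq> c" "u = as @ b # bs" "u0 = as @ c # cs"
    using parallel_decomp[OF \<open>u \<parallel> u0\<close>] by blast
  have T: "is_tree T" using assms(1) unfolding perfect_tree_def by blast
  have "as @ [b] \<in> T" using tree_prefix[OF T assms(2)] d(2) by simp
  moreover have "as @ [c] \<in> T" using tree_prefix[OF T assms(3)] d(3) by simp
  ultimately have sp: "splitting T as" using d(1) unfolding splitting_def by (cases b; cases c) auto
  have pas: "prefix as u" "prefix as u0" using d by auto
  have "prefix t as"
  proof -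
    from prefix_same_cases[OF assms(4) pas(1)] show ?thesis
    proof
      assume "prefix as t"
      then obtain r where r: "t = as @ r" by (auto simp: prefix_def)
      show ?thesis
      proof (cases r)
        case Nil then show ?thesis using r by simp
      next
        case (Cons e es)
        have "prefix (e # es) (b # bs)" using assms(4) r d(2) Cons by simp
        then have "e = b" by simp
        have "prefix (e # es) (c # cs)" using assms(5) r d(3) Cons by simp
        then have "e = c" by simp
        then show ?thesis using \<open>e = b\<close> d(1) by simp
      qed
    qed
  qed
  moreover have "strict_prefix as u0" using pas(2) d(3) by (auto simp: strict_prefix_def)
  ultimately show ?thesis using min sp by blast
qed

lemma C_step:
  assumes "perfect_tree T" "prefix t u0" "prefix (u0 @ [b]) u" "splitting T u0"
    and min: "\<forall>\<sigma>. prefix t \<sigma> \<and> strict_prefix \<sigma> u0 \<longrightarrow> \<not> splitting T \<sigma>"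
  shows "C T t u = insert u0 (C T (u0 @ [b]) u)" "u0 \<notin> C T (u0 @ [b]) u"
proof -
  show "u0 \<notin> C T (u0 @ [b]) u"
  proof
    assume "u0 \<in> C T (u0 @ [b]) u"
    then have "prefix (u0 @ [b]) u0" unfolding C_def by simp
    then have "length (u0 @ [b]) \<le> length u0" by (rule prefix_length_le)
    then show False by simp
  qed
  show "C T t u = insert u0 (C T (u0 @ [b]) u)"
  proof
    show "C T t u \<subseteq> insert u0 (C T (u0 @ [b]) u)"
    proof
      fix \<sigma> assume s: "\<sigma> \<in> C T t u"
      then have s1: "splitting T \<sigma>" "strict_prefix \<sigma> u" "prefix t \<sigma>"
        unfolding C_def split_preds_def by auto
      have "prefix \<sigma> u" using s1(2) by (simp add: strict_prefix_def)
      from prefix_same_cases[OF this assms(3)]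
      show "\<sigma> \<in> insert u0 (C T (u0 @ [b]) u)"
      proof
        assume "prefix \<sigma> (u0 @ [b])"
        then have "prefix \<sigma> u0 \<or> \<sigma> = u0 @ [b]" unfolding prefix_snoc by blast
        moreover have "\<sigma> \<noteq> u0 @ [b] \<or> prefix (u0@[b]) \<sigma>" by simp
        ultimately have "prefix \<sigma> u0 \<or> prefix (u0 @ [b]) \<sigma>" by blast
        then show ?thesis
        proof
          assume "prefix \<sigma> u0"
          have "\<sigma> = u0"
          proof (rule ccontr)
            assume "\<sigma> \<noteq> u0"
            then have "strict_prefix \<sigma> u0" using \<open>prefix \<sigma> u0\<close> by (simp add: strict_prefix_def)
            then show False using min s1(1,3) by blast
          qed
          then show ?thesis by simp
        next
          assume "prefix (u0 @ [b]) \<sigma>"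
          then show ?thesis using s1 unfolding C_def split_preds_def by auto
        qed
      next
        assume "prefix (u0 @ [b]) \<sigma>"
        then show ?thesis using s1 unfolding C_def split_preds_def by auto
      qed
    qed
  next
    show "insert u0 (C T (u0 @ [b]) u) \<subseteq> C T t u"
    proof
      fix \<sigma> assume "\<sigma> \<in> insert u0 (C T (u0 @ [b]) u)"
      then show "\<sigma> \<in> C T t u"
      proof
        assume "\<sigma> = u0"
        moreover have "strict_prefix u0 u"
        proof -
          have "prefix u0 (u0 @ [b])" by (rule prefixI) simp
          then have p: "prefix u0 u" using assms(3) by (rule prefix_order.order_trans)
          have "length (u0 @ [b]) \<le> length u" using assms(3) by (rule prefix_length_le)
          then have "u0 \<noteq> u" by auto
          then show ?thesis using p by (simp add: strict_prefix_def)
        qed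
        ultimately show ?thesis using assms(2,4) unfolding C_def split_preds_def by auto
      next
        assume "\<sigma> \<in> C T (u0 @ [b]) u"
        then have c: "splitting T \<sigma>" "strict_prefix \<sigma> u" "prefix (u0 @ [b]) \<sigma>"
          unfolding C_def split_preds_def by auto
        have "prefix u0 (u0 @ [b])" by (rule prefixI) simp
        then have "prefix t (u0 @ [b])" using assms(2) prefix_order.order_trans by blast
        then have "prefix t \<sigma>" using c(3) prefix_order.order_trans by blast
        then show ?thesis using c unfolding C_def split_preds_def by auto
      qed
    qed
  qed
qed

lemma B_finite:
  assumes "perfect_tree T"
  shows "t \<in> T \<Longrightarrow> finite (B T t j)"
proof (induction j arbitrary: t)
  case 0
  obtain u0 where u0: "u0\<in>T" "prefix t u0" "splitting T u0"
     "\<forall>\<sigma>. prefix t \<sigma> \<and> strict_prefix \<sigma> u0 \<longrightarrow> \<not> splitting T \<sigma>"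
    using min_split[OF assms 0] by blast
  have "B T t 0 \<subseteq> set (prefixes u0)"
  proof
    fix u assume u: "u \<in> B T t 0"
    then have uu: "u \<in> T" "prefix t u" "card (C T t u) = 0" unfolding B_def by auto
    from comparable[OF assms uu(1) u0(1) uu(2) u0(2,3,4)]
    show "u \<in> set (prefixes u0)"
    proof
      assume "\<exists>b. prefix (u0 @ [b]) u"
      then obtain b where "prefix (u0 @ [b]) u" by blast
      from C_step[OF assms u0(2) this u0(3,4)] have "C T t u \<noteq> {}" by auto
      then show ?thesis using uu(3) C_finite by auto
    qed simp
  qed
  then show ?case using finite_subset by blast
next
  case (Suc j)
  obtain u0 where u0: "u0\<in>T" "prefix t u0" "splitting T u0"
     "\<forall>\<sigma>. prefix t \<sigma> \<and> strict_prefix \<sigma> u0 \<longrightarrow> \<not> splitting T \<sigma>"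
    using min_split[OF assms Suc.prems] by blast
  have ch: "u0 @ [b] \<in> T" for b using u0(3) unfolding splitting_def by (cases b) auto
  have "B T t (Suc j) \<subseteq> set (prefixes u0) \<union> B T (u0 @ [False]) j \<union> B T (u0 @ [True]) j"
  proof
    fix u assume u: "u \<in> B T t (Suc j)"
    then have uu: "u \<in> T" "prefix t u" "card (C T t u) \<le> Suc j" unfolding B_def by auto
    from comparable[OF assms uu(1) u0(1) uu(2) u0(2,3,4)]
    show "u \<in> set (prefixes u0) \<union> B T (u0 @ [False]) j \<union> B T (u0 @ [True]) j"
    proof
      assume "\<exists>b. prefix (u0 @ [b]) u"
      then obtain b where b: "prefix (u0 @ [b]) u" by blast
      from C_step[OF assms u0(2) this u0(3,4)] uu(3) C_finite
      have "card (C T (u0 @ [b]) u) \<le> j" by simp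
      then have "u \<in> B T (u0 @ [b]) j" using uu(1) b unfolding B_def by simp
      then show ?thesis by (cases b) auto
    qed simp
  qed
  moreover have "finite (B T (u0 @ [b]) j)" for b using Suc.IH ch by blast
  ultimately show ?case using finite_subset by (metis finite_Un finite_set)
qed

lemma low_finite:
  assumes "perfect_tree T"
  shows "finite {u\<in>T. card (split_preds T u) \<le> j}"
proof -
  have "[] \<in> T" using assms tree_nil unfolding perfect_tree_def by blast
  moreover have "C T [] u = split_preds T u" for u unfolding C_def by simp
  ultimately have "{u\<in>T. card (split_preds T u) \<le> j} = B T [] j" unfolding B_def by simp
  then show ?thesis using B_finite[OF assms \<open>[] \<in> T\<close>] by simp
qed

lemma f_prop:
  assumes "perfect_tree T" "u \<in> T" "length u = f_fun T n"
  shows "2 * n \<le> card (split_preds T u)"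
proof -
  let ?F = "{u\<in>T. card (split_preds T u) \<le> 2 * n}"
  define k where "k = Suc (Max (insert 0 (length ` ?F)))"
  have fin: "finite (insert 0 (length ` ?F))" using low_finite[OF assms(1)] by simp
  have "\<forall>s\<in>T. length s = k \<longrightarrow> card (split_preds T s) \<ge> 2 * n"
  proof (intro ballI impI)
    fix s assume s: "s \<in> T" "length s = k"
    show "card (split_preds T s) \<ge> 2 * n"
    proof (rule ccontr)
      assume "\<not> ?thesis"
      then have "s \<in> ?F" using s by simp
      then have "length s \<le> Max (insert 0 (length ` ?F))" using fin by simp
      then show False using s(2) unfolding k_def by simp
    qed
  qed
  then have "\<forall>s\<in>T. length s = f_fun T n \<longrightarrow> card (split_preds T s) \<ge> 2 * n"
    unfolding f_fun_def by (rule LeastI)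
  then show ?thesis using assms by blast
qed

lemma f_ge:
  assumes "perfect_tree T"
  shows "2 * n \<le> f_fun T n"
proof -
  have "[] \<in> T" using assms tree_nil unfolding perfect_tree_def by blast
  from extension[OF assms this, of "f_fun T n"] obtain u where
    "u \<in> T" "length u = f_fun T n" by auto
  then show ?thesis using f_prop[OF assms] split_preds_card by (metis le_trans)
qed

lemma ivt:
  fixes g :: "nat \<Rightarrow> nat"
  assumes "g 0 = 0" "\<And>i. g (Suc i) \<le> Suc (g i)"
  shows "n \<le> g k \<Longrightarrow> \<exists>i\<le>k. g i = n"
proof (induction k)
  case 0 then show ?case using assms by auto
next
  case (Suc k)
  show ?case
  proof (cases "n \<le> g k")
    case True then show ?thesis using Suc.IH le_SucI by blast
  next
    case False then have "g (Suc k) = n" using Suc.prems assms(2)[of k] by simp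
    then show ?thesis by blast
  qed
qed

lemma take_Suc_sp:
  assumes "strict_prefix \<sigma> (take (Suc i) t)"
  shows "\<sigma> = take i t \<or> strict_prefix \<sigma> (take i t)"
proof -
  have l: "length \<sigma> < length (take (Suc i) t)" using assms prefix_length_less by blast
  have e: "\<sigma> = take (length \<sigma>) (take (Suc i) t)" using assms
    by (metis append_eq_conv_conj prefix_def strict_prefix_def)
  then have e2: "\<sigma> = take (length \<sigma>) t" using l by (metis length_take min_less_iff_conj take_take min.strict_order_iff)
  show ?thesis
  proof (cases "length \<sigma> = i")
    case True then show ?thesis using e2 by simp
  next
    case False
    then have "length \<sigma> < i" "length \<sigma> < length t" using l by auto
    then have "strict_prefix \<sigma> (take i t)"
      using e2 by (metis length_take min_less_iff_conj nat_less_le take_is_prefix take_take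
          prefix_order.le_neq_trans min.absorb4 )
    then show ?thesis by simp
  qed
qed

theorem mainTheorem15:
  assumes "perfect_tree S" and "perfect_tree T"
    and "\<not> eventually_le (h_fun S) (f_fun T)"
  shows "nowhere_dense_in S T"
proof (rule ccontr)
  assume "\<not> nowhere_dense_in S T"
  then obtain s where s: "s \<in> T" "subtree_at T s \<subseteq> S" unfolding nowhere_dense_in_def by blast
  have TS: "is_tree S" using assms(1) unfolding perfect_tree_def by blast
  have "\<forall>n\<ge>length s. h_fun S n \<le> f_fun T n"
  proof (intro allI impI)
    fix n assume n: "n \<ge> length s"
    define k where "k = f_fun T n"
    have "2 * n \<le> k" unfolding k_def using f_ge[OF assms(2)] by blast
    then have ks: "length s \<le> k" using n by simp
    from extension[OF assms(2) s(1), of "k - length s"] obtain t where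
      t: "t \<in> T" "prefix s t" "length t = k" using ks by auto
    have tS: "t \<in> S" using s(2) t unfolding subtree_at_def by blast
    have c2: "2 * n \<le> card (split_preds T t)" using f_prop[OF assms(2) t(1)] t(3) k_def by blast
    let ?A = "{\<sigma>\<in>split_preds T t. prefix s \<sigma>}"
    have "split_preds T t \<subseteq> ?A \<union> {\<sigma>. strict_prefix \<sigma> s}"
    proof
      fix \<sigma> assume a: "\<sigma> \<in> split_preds T t"
      then have "prefix \<sigma> t" unfolding split_preds_def by (auto simp: strict_prefix_def)
      from prefix_same_cases[OF this t(2)]
      show "\<sigma> \<in> ?A \<union> {\<sigma>. strict_prefix \<sigma> s}"
      proof
        assume "prefix \<sigma> s"
        then show ?thesis using a by (cases "\<sigma> = s") (auto simp: strict_prefix_def)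
      next
        assume "prefix s \<sigma>"
        then show ?thesis using a by simp
      qed
    qed
    then have "card (split_preds T t) \<le> card ?A + card {\<sigma>. strict_prefix \<sigma> s}"
    proof -
      have "card (split_preds T t) \<le> card (?A \<union> {\<sigma>. strict_prefix \<sigma> s})"
        by (rule card_mono) (use split_preds_finite strict_prefixes_finite \<open>split_preds T t \<subseteq> _\<close> in auto)
      also have "\<dots> \<le> card ?A + card {\<sigma>. strict_prefix \<sigma> s}" by (rule card_Un_le)
      finally show ?thesis .
    qed
    then have "n \<le> card ?A" using c2 strict_prefixes_card[of s] n by linarith
    moreover have "?A \<subseteq> split_preds S t"
    proof
      fix \<sigma> assume a: "\<sigma> \<in> ?A"
      then have a1: "splitting T \<sigma>" "strict_prefix \<sigma> t" "prefix s \<sigma>"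
        unfolding split_preds_def by auto
      have "\<sigma> @ [b] \<in> S" for b
      proof -
        have "\<sigma> @ [b] \<in> T" using a1(1) unfolding splitting_def by (cases b) auto
        moreover have "prefix s (\<sigma> @ [b])" proof -
          have "prefix \<sigma> (\<sigma> @ [b])" by (rule prefixI) simp
          then show ?thesis using a1(3) by (rule prefix_order.order_trans[rotated])
        qed
        ultimately show ?thesis using s(2) unfolding subtree_at_def by blast
      qed
      then show "\<sigma> \<in> split_preds S t" using a1 unfolding split_preds_def splitting_def by auto
    qed
    then have "card ?A \<le> card (split_preds S t)" by (rule card_mono[OF split_preds_finite])
    ultimately have nS: "n \<le> card (split_preds S t)" by linarith
    define g where "g i = card (split_preds S (take i t))" for i
    have g0: "g 0 = 0" unfolding g_def split_preds_def by simp
    have gs: "g (Suc i) \<le> Suc (g i)" for i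
    proof -
      have "split_preds S (take (Suc i) t) \<subseteq> insert (take i t) (split_preds S (take i t))"
      proof
        fix \<sigma> assume "\<sigma> \<in> split_preds S (take (Suc i) t)"
        then have "splitting S \<sigma>" "strict_prefix \<sigma> (take (Suc i) t)" unfolding split_preds_def by auto
        then show "\<sigma> \<in> insert (take i t) (split_preds S (take i t))"
          using take_Suc_sp[of \<sigma> i t] unfolding split_preds_def by auto
      qed
      then have "g (Suc i) \<le> card (insert (take i t) (split_preds S (take i t)))"
        unfolding g_def by (simp add: card_mono split_preds_finite)
      also have "\<dots> \<le> Suc (g i)" unfolding g_def by (simp add: card_insert_le_m1)
      finally show ?thesis .
    qed
    have "n \<le> g k" unfolding g_def using nS t(3) by simp
    from ivt[of g, OF g0 gs this] obtain i where i: "i \<le> k" "g i = n" by blast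
    have "take i t \<in> S" by (rule tree_prefix[OF TS tS take_is_prefix])
    moreover have "length (take i t) = i" using i(1) t(3) by simp
    moreover have "card (split_preds S (take i t)) = n" using i(2) unfolding g_def .
    ultimately have "\<exists>u\<in>S. length u = i \<and> card (split_preds S u) = n" by blast
    then have "h_fun S n \<le> i" unfolding h_fun_def by (rule Least_le)
    then show "h_fun S n \<le> f_fun T n" using i(1) k_def by simp
  qed
  then have "eventually_le (h_fun S) (f_fun T)"
    unfolding eventually_le_def eventually_sequentially by blast
  then show False using assms(3) by blast
qed

end
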